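(* The tag–options lattice $TO$ (defined below) is a complete lattice.
   Context: $T$ is a set of tags and $O$ a set of options. The tag lattice is the dual of the powerset lattice of $T$: its elements are subsets of $T$, ordered by $A \sqsubseteq B$ iff $A \supseteq B$, with meet given by union and join by intersection. For $T' \subseteq T$, the options lattice $O_{T'}$ consists of all functions $f : T' \to \mathcal{P}(O)$, ordered pointwise by inclusion, with meet the pointwise intersection and join the pointwise union. For $A,B \subseteq T$, define $\phi_{A\to B} : O_A \to O_B$ by $\phi_{A\to B}(f)(t) = f(t)$ if $t\in A\cap B$ and $=O$ if $t\in B\setminus A$. The tag–options lattice $TO$ has elements the pairs $(T', f)$ with $T' \subseteq T$ and $f \in O_{T'}$, ordered by $(A,f) \sqsubseteq (B,g)$ iff $A \supseteq B$ and $\phi_{A\to B}(f) \sqsubseteq g$ in $O_B$. For $\Lambda \subseteq TO$ with $V = \{T' \mid (T',f)\in\Lambda\}$, the join is $(\bigcap V, \bigvee\{\phi_{T'\to \bigcap V}(f) \mid (T',f)\in\Lambda\})$ and the meet is $(\bigcup V, \bigwedge\{\phi_{T'\to\bigcup V}(f) \mid (T',f)\in\Lambda\})$, where $\bigvee,\bigwedge$ denote join and meet in the corresponding options lattice. *)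

theory Defs
  imports "HOL-Algebra.Complete_Lattice"
begin

text \<open>Options lattice O_{T'}: functions T' -> P(Opt). A function on T' is represented
  canonically as a total function that is empty outside T'.\<close>
definition opts :: "'o set \<Rightarrow> 't set \<Rightarrow> ('t \<Rightarrow> 'o set) set" where
  "opts Opt A = {f. (\<forall>t\<in>A. f t \<subseteq> Opt) \<and> (\<forall>t. t \<notin> A \<longrightarrow> f t = {})}"

definition phi :: "'o set \<Rightarrow> 't set \<Rightarrow> 't set \<Rightarrow> ('t \<Rightarrow> 'o set) \<Rightarrow> ('t \<Rightarrow> 'o set)" where
  "phi Opt A B f = (\<lambda>t. if t \<in> A \<inter> B then f t else if t \<in> B - A then Opt else {})"

definition TO_carrier :: "'t set \<Rightarrow> 'o set \<Rightarrow> ('t set \<times> ('t \<Rightarrow> 'o set)) set" where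
  "TO_carrier T Opt = {(A, f). A \<subseteq> T \<and> f \<in> opts Opt A}"

definition TO_le :: "'o set \<Rightarrow> ('t set \<times> ('t \<Rightarrow> 'o set)) \<Rightarrow> ('t set \<times> ('t \<Rightarrow> 'o set)) \<Rightarrow> bool" where
  "TO_le Opt x y = (case x of (A, f) \<Rightarrow> case y of (B, g) \<Rightarrow>
      B \<subseteq> A \<and> (\<forall>t\<in>B. phi Opt A B f t \<subseteq> g t))"

definition TO :: "'t set \<Rightarrow> 'o set \<Rightarrow> ('t set \<times> ('t \<Rightarrow> 'o set)) gorder" where
  "TO T Opt = \<lparr> carrier = TO_carrier T Opt, eq = (=), le = TO_le Opt \<rparr>"

end

theory Submission
  imports Defs
begin

lemma TO_le_simp:
  "TO_le Opt (A, f) (B, g) \<longleftrightarrow> B \<subseteq> A \<and> (\<forall>t\<in>B. f t \<subseteq> g t)"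
  unfolding TO_le_def phi_def by auto

lemma po: "partial_order (TO T Opt)"
proof
  fix x y z
  show "x .=\<^bsub>TO T Opt\<^esub> x" by (simp add: TO_def)
  show "x .=\<^bsub>TO T Opt\<^esub> y \<Longrightarrow> y .=\<^bsub>TO T Opt\<^esub> x" by (simp add: TO_def)
  show "x .=\<^bsub>TO T Opt\<^esub> y \<Longrightarrow> y .=\<^bsub>TO T Opt\<^esub> z \<Longrightarrow> x .=\<^bsub>TO T Opt\<^esub> z" by (simp add: TO_def)
  show "x \<sqsubseteq>\<^bsub>TO T Opt\<^esub> x" by (cases x) (simp add: TO_def TO_le_simp)
  show "x \<sqsubseteq>\<^bsub>TO T Opt\<^esub> y \<Longrightarrow> y \<sqsubseteq>\<^bsub>TO T Opt\<^esub> z \<Longrightarrow> x \<sqsubseteq>\<^bsub>TO T Opt\<^esub> z"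
    by (cases x; cases y; cases z) (simp add: TO_def TO_le_simp, blast)
next
  fix x y
  assume "x \<sqsubseteq>\<^bsub>TO T Opt\<^esub> y" "y \<sqsubseteq>\<^bsub>TO T Opt\<^esub> x" "x \<in> carrier (TO T Opt)" "y \<in> carrier (TO T Opt)"
  then show "x .=\<^bsub>TO T Opt\<^esub> y"
    by (cases x; cases y) (auto simp add: TO_def TO_le_simp TO_carrier_def opts_def fun_eq_iff)
next
  fix x y x' y'
  show "x .=\<^bsub>TO T Opt\<^esub> y \<Longrightarrow> x' .=\<^bsub>TO T Opt\<^esub> y' \<Longrightarrow> (x \<sqsubseteq>\<^bsub>TO T Opt\<^esub> x') = (y \<sqsubseteq>\<^bsub>TO T Opt\<^esub> y')"
    by (simp add: TO_def)
qed (simp_all add: TO_def)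

theorem theorem6:
  fixes T :: "'t set" and Opt :: "'o set"
  shows "complete_lattice (TO T Opt)"
proof (rule partial_order.complete_latticeI[OF po])
  fix S assume S: "S \<subseteq> carrier (TO T Opt)"
  define A where "A = T \<inter> \<Inter>(fst ` S)"
  define f where "f = (\<lambda>t. if t \<in> A then \<Union>{g t | B g. (B, g) \<in> S} else {})"
  have mem: "(A, f) \<in> carrier (TO T Opt)"
    using S by (auto simp: TO_def TO_carrier_def opts_def A_def f_def)
  have up: "(A, f) \<in> Upper (TO T Opt) S"
    using S mem by (auto simp: Upper_def TO_def TO_le_simp A_def f_def)
  have "least (TO T Opt) (A, f) (Upper (TO T Opt) S)"
  proof (rule least_UpperI)
    fix x assume "x \<in> S" then show "x \<sqsubseteq>\<^bsub>TO T Opt\<^esub> (A, f)" using up S by (cases x) (auto simp: Upper_def)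
  next
    fix y assume y: "y \<in> Upper (TO T Opt) S"
    obtain C h where yc: "y = (C, h)" by (cases y)
    have yc2: "(C, h) \<in> carrier (TO T Opt)" using y yc by (auto simp: Upper_def)
    have "\<forall>x\<in>S. x \<sqsubseteq>\<^bsub>TO T Opt\<^esub> (C, h)" using y yc S by (auto simp: Upper_def)
    then have "\<forall>x\<in>S. TO_le Opt x (C, h)" by (simp add: TO_def)
    note L = this
    have "\<forall>B g. (B, g) \<in> S \<longrightarrow> C \<subseteq> B \<and> (\<forall>t\<in>C. g t \<subseteq> h t)"
      proof (intro allI impI)
      fix B g assume "(B, g) \<in> S"
      with L have "TO_le Opt (B, g) (C, h)" by blast
      then show "C \<subseteq> B \<and> (\<forall>t\<in>C. g t \<subseteq> h t)" by (simp add: TO_le_simp)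
    qed
    then have H: "\<And>B g. (B, g) \<in> S \<Longrightarrow> C \<subseteq> B \<and> (\<forall>t\<in>C. g t \<subseteq> h t)" by blast
    have CT: "C \<subseteq> T" using yc2 by (simp add: TO_def TO_carrier_def)
    have "C \<subseteq> A"
    proof
      fix t assume t: "t \<in> C"
      have "t \<in> fst x" if "x \<in> S" for x using H[of "fst x" "snd x"] that t by auto
      then show "t \<in> A" using CT t by (auto simp: A_def)
    qed
    moreover have "\<forall>t\<in>C. f t \<subseteq> h t"
    proof
      fix t assume t: "t \<in> C"
      then have "t \<in> A" using \<open>C \<subseteq> A\<close> by blast
      then have "f t = \<Union>{g t | B g. (B, g) \<in> S}" by (simp add: f_def)
      also have "\<dots> \<subseteq> h t" using H t by blast
      finally show "f t \<subseteq> h t" .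
    qed
    ultimately show "(A, f) \<sqsubseteq>\<^bsub>TO T Opt\<^esub> y" using yc
      by (simp add: TO_def TO_le_simp)
  qed (simp_all only: S mem)
  then show "\<exists>s. least (TO T Opt) s (Upper (TO T Opt) S)" ..
next
  fix S assume S: "S \<subseteq> carrier (TO T Opt)"
  define A where "A = \<Union>(fst ` S)"
  define f where "f = (\<lambda>t. if t \<in> A then \<Inter>{g t | B g. (B, g) \<in> S \<and> t \<in> B} else {})"
  have mem: "(A, f) \<in> carrier (TO T Opt)"
  proof -
    have "f t \<subseteq> Opt" if t: "t \<in> A" for t
    proof -
      from t obtain x where x: "x \<in> S" "t \<in> fst x" by (auto simp: A_def)
      have "snd x \<in> opts Opt (fst x)" using S x(1) by (cases x) (auto simp: TO_def TO_carrier_def)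
      then have "snd x t \<subseteq> Opt" using x(2) by (simp add: opts_def)
      moreover have "f t \<subseteq> snd x t" using t x by (cases x) (auto simp: f_def)
      ultimately show ?thesis by blast
    qed
    moreover have "A \<subseteq> T"
    proof
      fix t assume "t \<in> A"
      then obtain x where x: "x \<in> S" "t \<in> fst x" by (auto simp: A_def)
      have "fst x \<subseteq> T" using S x(1) by (cases x) (auto simp: TO_def TO_carrier_def)
      then show "t \<in> T" using x(2) by blast
    qed
    ultimately show ?thesis by (auto simp: TO_def TO_carrier_def opts_def f_def)
  qed
  have "greatest (TO T Opt) (A, f) (Lower (TO T Opt) S)"
  proof (rule greatest_LowerI)
    fix x assume "x \<in> S" then show "(A, f) \<sqsubseteq>\<^bsub>TO T Opt\<^esub> x"
      by (cases x) (auto simp: TO_def TO_le_simp A_def f_def)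
  next
    fix y assume y: "y \<in> Lower (TO T Opt) S"
    obtain C h where yc: "y = (C, h)" by (cases y)
    have "\<forall>x\<in>S. (C, h) \<sqsubseteq>\<^bsub>TO T Opt\<^esub> x" using y yc S by (auto simp: Lower_def)
    then have "\<forall>x\<in>S. TO_le Opt (C, h) x" by (simp add: TO_def)
    note L = this
    have "\<forall>B g. (B, g) \<in> S \<longrightarrow> B \<subseteq> C \<and> (\<forall>t\<in>B. h t \<subseteq> g t)"
      proof (intro allI impI)
      fix B g assume "(B, g) \<in> S"
      with L have "TO_le Opt (C, h) (B, g)" by blast
      then show "B \<subseteq> C \<and> (\<forall>t\<in>B. h t \<subseteq> g t)" by (simp add: TO_le_simp)
    qed
    then have H: "\<And>B g. (B, g) \<in> S \<Longrightarrow> B \<subseteq> C \<and> (\<forall>t\<in>B. h t \<subseteq> g t)" by blast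
    have "A \<subseteq> C"
    proof
      fix t assume "t \<in> A"
      then obtain x where x: "x \<in> S" "t \<in> fst x" by (auto simp: A_def)
      then show "t \<in> C" using H[of "fst x" "snd x"] by auto
    qed
    moreover have "\<forall>t\<in>A. h t \<subseteq> f t"
    proof
      fix t assume t: "t \<in> A"
      then have "f t = \<Inter>{g t | B g. (B, g) \<in> S \<and> t \<in> B}" by (simp add: f_def)
      moreover have "h t \<subseteq> \<Inter>{g t | B g. (B, g) \<in> S \<and> t \<in> B}" using H by blast
      ultimately show "h t \<subseteq> f t" by simp
    qed
    ultimately show "y \<sqsubseteq>\<^bsub>TO T Opt\<^esub> (A, f)" using yc
      by (simp add: TO_def TO_le_simp)
  qed (simp_all only: S mem)
  then show "\<exists>i. greatest (TO T Opt) i (Lower (TO T Opt) S)" ..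
qed

end
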